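(* The triple $(\mathcal{E}, \nabla^{\mathrm{sp}}, \gamma)$ with $\mathcal{E} = A^{4}$, $\nabla^{\mathrm{sp}}(e_{\alpha}) = 0$ (extended by the left Leibniz rule) and $\gamma(\mathrm{d} z^{i}\otimes_{A} e_{\alpha}) = \gamma_{\theta}^{i}\, e_{\alpha}$ (extended left $A$-linearly) is a spinorial structure on the Riemannian structure $(g,(\nabla,\sigma))$ on $\mathbb{R}^4_\theta$, i.e.\ it satisfies the Clifford relations $\gamma_{[2]}(\omega\otimes_A\zeta\otimes_A s)+\gamma_{[2]}(\sigma(\omega\otimes_A\zeta)\otimes_A s) = -2\,g^{-1}(\omega\otimes_A\zeta)\,s$ and Clifford compatibility $\nabla^{\mathrm{sp}}\circ\gamma = (\mathrm{id}\otimes_A\gamma)\circ\nabla^\otimes$.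
   Context: Let $A = \mathbb{C}[z^{1},z^{2},z^{3},z^{4}]/(z^{i} z^{j} - R^{ji} z^{j} z^{i})$ be the algebra of $\mathbb{R}^4_\theta$ in complex coordinates ($z^3=\overline{z^1}$, $z^4=\overline{z^2}$), where $R$ is the matrix with rows $(1,e^{-i\theta},1,e^{i\theta})$, $(e^{i\theta},1,e^{-i\theta},1)$, $(1,e^{i\theta},1,e^{-i\theta})$, $(e^{-i\theta},1,e^{i\theta},1)$, $\theta\in\mathbb{R}$. The differential calculus $\Omega^1_A$ is the free left $A$-module with basis $\mathrm{d} z^i$, with right action $\mathrm{d} z^i\, z^j = R^{ji} z^j\,\mathrm{d} z^i$ and $\mathrm{d}(z^i)=\mathrm{d} z^i$. The metric is $g=\sum_{i,j} g_{ij}\,\mathrm{d} z^i\otimes_A\mathrm{d} z^j$ with $(g_{ij}) = \tfrac{1}{2}$ times the matrix with rows $(0,0,1,0),(0,0,0,1),(1,0,0,0),(0,1,0,0)$, inverse metric $g^{-1}(\mathrm{d} z^i\otimes_A\mathrm{d} z^j)=g^{ij}$ with $(g^{ij})$ equal to $2$ times the same matrix. The bimodule connection is $\nabla(\mathrm{d} z^i)=0$ (left Leibniz rule) and $\sigma(\mathrm{d} z^i\otimes_A\mathrm{d} z^j) = R^{ji}\,\mathrm{d} z^j\otimes_A\mathrm{d} z^i$. $\{e_\alpha\}$ is the standard basis of $A^4$. The deformed gamma matrices are, in $2\times 2$ block form with Pauli matrices $\sigma^k$ and identity $I_2$: $\gamma_\theta^{1}$ has off-diagonal blocks $e^{\frac{i}{4}\theta}(-\sigma^{1}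 - i\sigma^{2})$ (upper right) and $e^{-\frac{i}{4}\theta}(\sigma^{1} + i\sigma^{2})$ (lower left); $\gamma_\theta^{2}$: $e^{-\frac{i}{4}\theta}(-\sigma^{3} - I_{2})$ and $e^{\frac{i}{4}\theta}(\sigma^{3} -I_{2})$; $\gamma_\theta^{3}$: $e^{\frac{i}{4}\theta}(-\sigma^{1} + i\sigma^{2})$ and $e^{-\frac{i}{4}\theta}(\sigma^{1} - i\sigma^{2})$; $\gamma_\theta^{4}$: $e^{-\frac{i}{4}\theta}(-\sigma^{3} + I_{2})$ and $e^{\frac{i}{4}\theta}(\sigma^{3} + I_{2})$. Here $\gamma_{[2]} = \gamma\circ(\mathrm{id}\otimes_A\gamma)$ and $\nabla^\otimes(\omega\otimes_A s) = \nabla(\omega)\otimes_A s + (\sigma\otimes_A\mathrm{id})(\omega\otimes_A\nabla^{\mathrm{sp}}(s))$. *)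

theory Defs
  imports Complex_Main
begin

definition idx :: "nat set" where "idx = {1..4}"

text \<open>Rmat th r c is the entry R^{rc} in row r, column c (r, c in 1..4).\<close>
definition Rmat :: "real \<Rightarrow> nat \<Rightarrow> nat \<Rightarrow> complex" where
  "Rmat th r c = (let e = cis th; e' = cis (- th) in
     [[1, e', 1, e], [e, 1, e', 1], [1, e, 1, e'], [e', 1, e, 1]] ! (r - 1) ! (c - 1))"

text \<open>A has the PBW basis of normally ordered monomials z1^(m 1) z2^(m 2) z3^(m 3) z4^(m 4);
  an element of A is a finitely supported coefficient function on exponent vectors
  m :: nat => nat that vanish outside 1..4.\<close>

type_synonym mono = "nat \<Rightarrow> nat"
type_synonym alg = "mono \<Rightarrow> complex"

definition isA :: "alg \<Rightarrow> bool" where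
  "isA f \<longleftrightarrow> finite {m. f m \<noteq> 0} \<and> (\<forall>m. f m \<noteq> 0 \<longrightarrow> (\<forall>k. k \<notin> idx \<longrightarrow> m k = 0))"

definition zeroA :: alg where "zeroA = (\<lambda>_. 0)"
definition oneA :: alg where "oneA = (\<lambda>m. if m = (\<lambda>_. 0) then 1 else 0)"
definition addA :: "alg \<Rightarrow> alg \<Rightarrow> alg" where "addA f g = (\<lambda>m. f m + g m)"
definition smulA :: "complex \<Rightarrow> alg \<Rightarrow> alg" where "smulA c f = (\<lambda>m. c * f m)"
definition sumA :: "('i \<Rightarrow> alg) \<Rightarrow> 'i set \<Rightarrow> alg" where
  "sumA F S = (\<lambda>m. \<Sum>x\<in>S. F x m)"

definition zgen :: "nat \<Rightarrow> alg" where
  "zgen i = (\<lambda>m. if m = (\<lambda>k. if k = i then 1 else 0) then 1 else 0)"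

text \<open>z^a z^b = phase a b z^(a+b), obtained by reordering with z^i z^j = R^{ji} z^j z^i.\<close>
definition phase :: "real \<Rightarrow> mono \<Rightarrow> mono \<Rightarrow> complex" where
  "phase th a b = (\<Prod>i\<in>idx. \<Prod>j\<in>idx. if j < i then (Rmat th j i) ^ (a i * b j) else 1)"

definition mulA :: "real \<Rightarrow> alg \<Rightarrow> alg \<Rightarrow> alg" where
  "mulA th f g = (\<lambda>c. \<Sum>a\<in>{m. f m \<noteq> 0}. \<Sum>b\<in>{m. g m \<noteq> 0}.
      if (\<lambda>k. a k + b k) = c then phase th a b * f a * g b else 0)"

text \<open>twist th i a is the element with dz^i a = (twist th i a) dz^i,
  from dz^i z^j = R^{ji} z^j dz^i.\<close>
definition twist :: "real \<Rightarrow> nat \<Rightarrow> alg \<Rightarrow> alg" where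
  "twist th i f = (\<lambda>m. (\<Prod>j\<in>idx. (Rmat th j i) ^ (m j)) * f m)"

section \<open>Free modules: coordinates w.r.t. the left bases dz^i, e_alpha, and their tensor products\<close>

type_synonym form1 = "nat \<Rightarrow> alg"            (* \<Omega>^1, coefficient of dz^i *)
type_synonym spinor = "nat \<Rightarrow> alg"           (* E = A^4, coefficient of e_alpha *)
type_synonym form_spinor = "nat \<Rightarrow> nat \<Rightarrow> alg"  (* \<Omega>^1 \<otimes>_A E, basis dz^i \<otimes> e_alpha *)
type_synonym form2 = "nat \<Rightarrow> nat \<Rightarrow> alg"        (* \<Omega>^1 \<otimes>_A \<Omega>^1, basis dz^i \<otimes> dz^j *)
type_synonym form2_spinor = "nat \<Rightarrow> nat \<Rightarrow> nat \<Rightarrow> alg" (* basis dz^i \<otimes> dz^j \<otimes> e_alpha *)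

definition isV :: "(nat \<Rightarrow> alg) \<Rightarrow> bool" where
  "isV v \<longleftrightarrow> (\<forall>i. isA (v i)) \<and> (\<forall>i. i \<notin> idx \<longrightarrow> v i = zeroA)"

definition restr1 :: "(nat \<Rightarrow> alg) \<Rightarrow> nat \<Rightarrow> alg" where
  "restr1 v = (\<lambda>i. if i \<in> idx then v i else zeroA)"
definition restr2 :: "(nat \<Rightarrow> nat \<Rightarrow> alg) \<Rightarrow> nat \<Rightarrow> nat \<Rightarrow> alg" where
  "restr2 v = (\<lambda>i j. if i \<in> idx \<and> j \<in> idx then v i j else zeroA)"
definition restr3 :: "(nat \<Rightarrow> nat \<Rightarrow> nat \<Rightarrow> alg) \<Rightarrow> nat \<Rightarrow> nat \<Rightarrow> nat \<Rightarrow> alg" where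
  "restr3 v = (\<lambda>i j k. if i \<in> idx \<and> j \<in> idx \<and> k \<in> idx then v i j k else zeroA)"

definition add1 :: "(nat \<Rightarrow> alg) \<Rightarrow> (nat \<Rightarrow> alg) \<Rightarrow> nat \<Rightarrow> alg" where
  "add1 v w = (\<lambda>i. addA (v i) (w i))"
definition smul1 :: "complex \<Rightarrow> (nat \<Rightarrow> alg) \<Rightarrow> nat \<Rightarrow> alg" where
  "smul1 c v = (\<lambda>i. smulA c (v i))"
definition add3 :: "form2_spinor \<Rightarrow> form2_spinor \<Rightarrow> form2_spinor" where
  "add3 X Y = (\<lambda>i j k. addA (X i j k) (Y i j k))"
definition sum3 :: "('i \<Rightarrow> form2_spinor) \<Rightarrow> 'i set \<Rightarrow> form2_spinor" where
  "sum3 F S = (\<lambda>i j k. sumA (\<lambda>x. F x i j k) S)"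

text \<open>left action a.v and right action on \<Omega>^1: (v_i dz^i) a = v_i twist_i(a) dz^i\<close>
definition lact1 :: "real \<Rightarrow> alg \<Rightarrow> (nat \<Rightarrow> alg) \<Rightarrow> nat \<Rightarrow> alg" where
  "lact1 th a v = (\<lambda>i. mulA th a (v i))"
definition ractO :: "real \<Rightarrow> form1 \<Rightarrow> alg \<Rightarrow> form1" where
  "ractO th v a = (\<lambda>i. mulA th (v i) (twist th i a))"

definition dz :: "nat \<Rightarrow> form1" where "dz i = (\<lambda>k. if k = i then oneA else zeroA)"
definition eE :: "nat \<Rightarrow> spinor" where "eE a = (\<lambda>k. if k = a then oneA else zeroA)"

text \<open>omega \<otimes>_A s, with omega in \<Omega>^1 and s in E (or s in \<Omega>^1)\<close>
definition tensOE :: "real \<Rightarrow> form1 \<Rightarrow> (nat \<Rightarrow> alg) \<Rightarrow> nat \<Rightarrow> nat \<Rightarrow> alg" where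
  "tensOE th w s = restr2 (\<lambda>i a. mulA th (w i) (twist th i (s a)))"
text \<open>omega \<otimes>_A U with U in \<Omega>^1 \<otimes>_A E\<close>
definition tensO_OE :: "real \<Rightarrow> form1 \<Rightarrow> form_spinor \<Rightarrow> form2_spinor" where
  "tensO_OE th w U = restr3 (\<lambda>i j a. mulA th (w i) (twist th i (U j a)))"
text \<open>T \<otimes>_A s with T in \<Omega>^1 \<otimes>_A \<Omega>^1 and s in E\<close>
definition tensOO_E :: "real \<Rightarrow> form2 \<Rightarrow> spinor \<Rightarrow> form2_spinor" where
  "tensOO_E th T s = restr3 (\<lambda>i j a. mulA th (T i j) (twist th i (twist th j (s a))))"

definition gup :: "nat \<Rightarrow> nat \<Rightarrow> complex" where
  "gup i j = 2 * (if (i, j) \<in> {(1,3), (2,4), (3,1), (4,2)} then 1 else 0)"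

definition ginv :: "form2 \<Rightarrow> alg" where
  "ginv T = sumA (\<lambda>(i, j). smulA (gup i j) (T i j)) (idx \<times> idx)"

text \<open>sigma(dz^i \<otimes> dz^j) = R^{ji} dz^j \<otimes> dz^i, extended left A-linearly\<close>
definition sigma :: "real \<Rightarrow> form2 \<Rightarrow> form2" where
  "sigma th T = restr2 (\<lambda>p q. smulA (Rmat th p q) (T q p))"
definition sigma_id :: "real \<Rightarrow> form2_spinor \<Rightarrow> form2_spinor" where
  "sigma_id th X = restr3 (\<lambda>p q a. smulA (Rmat th p q) (X q p a))"

text \<open>d is given as a hypothesis: the C-linear map A \<rightarrow> \<Omega>^1 with d(z^i) = dz^i
  satisfying the Leibniz rule.\<close>
definition is_diff :: "real \<Rightarrow> (alg \<Rightarrow> form1) \<Rightarrow> bool" where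
  "is_diff th d \<longleftrightarrow>
     (\<forall>i\<in>idx. d (zgen i) = dz i) \<and>
     (\<forall>f g. isA f \<longrightarrow> isA g \<longrightarrow> d (addA f g) = add1 (d f) (d g)) \<and>
     (\<forall>c f. isA f \<longrightarrow> d (smulA c f) = smul1 c (d f)) \<and>
     (\<forall>f g. isA f \<longrightarrow> isA g \<longrightarrow>
        d (mulA th f g) = add1 (ractO th (d f) g) (lact1 th f (d g)))"

text \<open>nabla(dz^i) = 0 with left Leibniz: nabla(sum w_i dz^i) = sum d(w_i) \<otimes> dz^i\<close>
definition nablaO :: "(alg \<Rightarrow> form1) \<Rightarrow> form1 \<Rightarrow> form2" where
  "nablaO d w = restr2 (\<lambda>k i. d (w i) k)"

text \<open>nabla^sp(e_alpha) = 0 with left Leibniz\<close>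
definition nablaSp :: "(alg \<Rightarrow> form1) \<Rightarrow> spinor \<Rightarrow> form_spinor" where
  "nablaSp d s = restr2 (\<lambda>k a. d (s a) k)"

text \<open>nabla^\<otimes>(w \<otimes> s) = nabla(w) \<otimes> s + (sigma \<otimes> id)(w \<otimes> nabla^sp(s)),
  extended additively via U = sum (U_{i,alpha} dz^i) \<otimes> e_alpha\<close>
definition nablaT_pure :: "real \<Rightarrow> (alg \<Rightarrow> form1) \<Rightarrow> form1 \<Rightarrow> spinor \<Rightarrow> form2_spinor" where
  "nablaT_pure th d w s =
     add3 (tensOO_E th (nablaO d w) s) (sigma_id th (tensO_OE th w (nablaSp d s)))"
definition nablaT :: "real \<Rightarrow> (alg \<Rightarrow> form1) \<Rightarrow> form_spinor \<Rightarrow> form2_spinor" where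
  "nablaT th d U = sum3 (\<lambda>(i, a). nablaT_pure th d (lact1 th (U i a) (dz i)) (eE a)) (idx \<times> idx)"

text \<open>Pauli matrices and identity (indices 1..2, row then column)\<close>
definition pauli :: "nat \<Rightarrow> nat \<Rightarrow> nat \<Rightarrow> complex" where
  "pauli k r c = (if k = 1 then [[0, 1], [1, 0]]
                  else if k = 2 then [[0, - \<i>], [\<i>, 0]]
                  else [[1, 0], [0, -1]]) ! (r - 1) ! (c - 1)"
definition I2 :: "nat \<Rightarrow> nat \<Rightarrow> complex" where "I2 r c = (if r = c then 1 else 0)"

definition offdiag :: "(nat \<Rightarrow> nat \<Rightarrow> complex) \<Rightarrow> (nat \<Rightarrow> nat \<Rightarrow> complex) \<Rightarrow> nat \<Rightarrow> nat \<Rightarrow> complex" where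
  "offdiag U L r c = (if r \<in> {1, 2} \<and> c \<in> {3, 4} then U r (c - 2)
                      else if r \<in> {3, 4} \<and> c \<in> {1, 2} then L (r - 2) c else 0)"

definition mlin :: "complex \<Rightarrow> (nat \<Rightarrow> nat \<Rightarrow> complex) \<Rightarrow> complex \<Rightarrow> (nat \<Rightarrow> nat \<Rightarrow> complex) \<Rightarrow> nat \<Rightarrow> nat \<Rightarrow> complex" where
  "mlin a M b N = (\<lambda>r c. a * M r c + b * N r c)"

text \<open>gam th i r c: entry (row r, column c) of gamma_theta^i\<close>
definition gam :: "real \<Rightarrow> nat \<Rightarrow> nat \<Rightarrow> nat \<Rightarrow> complex" where
  "gam th i = (let p = cis (th / 4); m = cis (- th / 4) in
     if i = 1 then offdiag (\<lambda>r c. p * mlin (-1) (pauli 1) (- \<i>) (pauli 2) r c)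
                          (\<lambda>r c. m * mlin 1 (pauli 1) \<i> (pauli 2) r c)
     else if i = 2 then offdiag (\<lambda>r c. m * mlin (-1) (pauli 3) (-1) I2 r c)
                          (\<lambda>r c. p * mlin 1 (pauli 3) (-1) I2 r c)
     else if i = 3 then offdiag (\<lambda>r c. p * mlin (-1) (pauli 1) \<i> (pauli 2) r c)
                          (\<lambda>r c. m * mlin 1 (pauli 1) (- \<i>) (pauli 2) r c)
     else offdiag (\<lambda>r c. m * mlin (-1) (pauli 3) 1 I2 r c)
                  (\<lambda>r c. p * mlin 1 (pauli 3) 1 I2 r c))"

text \<open>gamma(dz^i \<otimes> e_alpha) = gamma^i e_alpha, extended left A-linearly\<close>
definition gamma :: "real \<Rightarrow> form_spinor \<Rightarrow> spinor" where
  "gamma th U = restr1 (\<lambda>b. sumA (\<lambda>(i, a). smulA (gam th i b a) (U i a)) (idx \<times> idx))"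
definition id_gamma :: "real \<Rightarrow> form2_spinor \<Rightarrow> form_spinor" where
  "id_gamma th X = restr2 (\<lambda>i b. sumA (\<lambda>(j, a). smulA (gam th j b a) (X i j a)) (idx \<times> idx))"
definition gamma2 :: "real \<Rightarrow> form2_spinor \<Rightarrow> spinor" where
  "gamma2 th X = gamma th (id_gamma th X)"

end

theory Submission
  imports Defs
begin


definition fs :: "alg \<Rightarrow> bool" where "fs f \<longleftrightarrow> finite {m. f m \<noteq> 0}"
definition dl :: "mono \<Rightarrow> alg" where "dl a = (\<lambda>m. if m = a then 1 else 0)"

lemma mulA_eq:
  assumes "finite S" "finite T" "{m. f m \<noteq> 0} \<subseteq> S" "{m. g m \<noteq> 0} \<subseteq> T"
  shows "mulA th f g c = (\<Sum>a\<in>S. \<Sum>b\<in>T. if (\<lambda>k. a k + b k) = c then phase th a b * f a * g b else 0)"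
proof -
  have fin: "finite {m. f m \<noteq> 0}" "finite {m. g m \<noteq> 0}" using assms finite_subset by blast+
  have "mulA th f g c = (\<Sum>a\<in>S. \<Sum>b\<in>{m. g m \<noteq> 0}. if (\<lambda>k. a k + b k) = c then phase th a b * f a * g b else 0)"
    unfolding mulA_def
  proof (rule sum.mono_neutral_left)
    have z: "\<And>a. f a = 0 \<Longrightarrow> (\<Sum>b\<in>{m. g m \<noteq> 0}. if (\<lambda>k. a k + b k) = c then phase th a b * f a * g b else 0) = 0"
      by (rule sum.neutral) simp
    show "\<forall>i\<in>S - {m. f m \<noteq> 0}. (\<Sum>b\<in>{m. g m \<noteq> 0}. if (\<lambda>k. i k + b k) = c then phase th i b * f i * g b else 0) = 0"
      using z by blast
  qed (use assms fin in auto)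
  also have "\<dots> = (\<Sum>a\<in>S. \<Sum>b\<in>T. if (\<lambda>k. a k + b k) = c then phase th a b * f a * g b else 0)"
    by (intro sum.cong refl sum.mono_neutral_left) (auto simp: assms fin)
  finally show ?thesis .
qed

lemma mulA_nfs: "\<not> fs f \<Longrightarrow> mulA th f g = zeroA"
  by (simp add: mulA_def fs_def zeroA_def)
lemma mulA_nfs2: "\<not> fs g \<Longrightarrow> mulA th f g = zeroA"
  by (simp add: mulA_def fs_def zeroA_def)

lemma fs_mulA: "fs (mulA th f g)"
proof (cases "fs f \<and> fs g")
  case True
  let ?P = "(\<lambda>(a,b). (\<lambda>k. a k + b k)) ` ({m. f m \<noteq> 0} \<times> {m. g m \<noteq> 0})"
  have "{c. mulA th f g c \<noteq> 0} \<subseteq> ?P"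
  proof
    fix c assume "c \<in> {c. mulA th f g c \<noteq> 0}"
    then have "mulA th f g c \<noteq> 0" by simp
    then obtain a where a: "a \<in> {m. f m \<noteq> 0}" and
s: "(\<Sum>b\<in>{m. g m \<noteq> 0}. if (\<lambda>k. a k + b k) = c then phase th a b * f a * g b else 0) \<noteq> 0"
      unfolding mulA_def by (rule sum.not_neutral_contains_not_neutral)
    from s obtain b where b: "b \<in> {m. g m \<noteq> 0}" and
      "(if (\<lambda>k. a k + b k) = c then phase th a b * f a * g b else 0) \<noteq> 0"
      by (rule sum.not_neutral_contains_not_neutral)
    then have "(\<lambda>k. a k + b k) = c" by (simp split: if_splits)
    then show "c \<in> ?P" using a b by force
  qed
  moreover have "finite ?P" using True by (simp add: fs_def)
  ultimately show ?thesis unfolding fs_def by (rule finite_subset)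
next
  case False then show ?thesis using mulA_nfs mulA_nfs2 by (auto simp: fs_def zeroA_def)
qed

lemma fs_zeroA[simp]: "fs zeroA" by (simp add: fs_def zeroA_def)
lemma fs_oneA[simp]: "fs oneA" by (simp add: fs_def oneA_def)
lemma fs_dl[simp]: "fs (dl a)" by (simp add: fs_def dl_def)
lemma fs_addA[simp]: "fs f \<Longrightarrow> fs g \<Longrightarrow> fs (addA f g)"
  unfolding fs_def addA_def by (rule finite_subset[of _ "{m. f m \<noteq> 0} \<union> {m. g m \<noteq> 0}"]) auto
lemma fs_smulA[simp]: "fs f \<Longrightarrow> fs (smulA c f)"
  unfolding fs_def smulA_def by (rule finite_subset[of _ "{m. f m \<noteq> 0}"]) auto
lemma fs_twist[simp]: "fs f \<Longrightarrow> fs (twist th i f)"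
  unfolding fs_def twist_def by (rule finite_subset[of _ "{m. f m \<noteq> 0}"]) auto
lemma sumA_empty[simp]: "sumA F {} = zeroA" by (simp add: sumA_def zeroA_def)
lemma sumA_insert[simp]: "finite S \<Longrightarrow> x \<notin> S \<Longrightarrow> sumA F (insert x S) = addA (F x) (sumA F S)"
  by (simp add: sumA_def addA_def)
lemma fs_sumA[simp]: "finite S \<Longrightarrow> (\<And>x. x \<in> S \<Longrightarrow> fs (F x)) \<Longrightarrow> fs (sumA F S)"
  by (induction S rule: finite_induct) auto

lemma mulA_zeroA_left[simp]: "mulA th zeroA g = zeroA" by (simp add: mulA_def zeroA_def)
lemma mulA_zeroA_right[simp]: "mulA th f zeroA = zeroA" by (simp add: mulA_def zeroA_def)

lemma if_add_split: "(if P then (x::complex) * (y + z) * w else 0) = (if P then x * y * w else 0) + (if P then x * z * w else 0)"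
  "(if P then (x::complex) * w * (y + z) else 0) = (if P then x * w * y else 0) + (if P then x * w * z else 0)"
  by (auto simp: algebra_simps)

lemma mulA_addA_left:
  assumes "fs f1" "fs f2" "fs g"
  shows "mulA th (addA f1 f2) g = addA (mulA th f1 g) (mulA th f2 g)"
proof
  fix c
  let ?S = "{m. f1 m \<noteq> 0} \<union> {m. f2 m \<noteq> 0}" and ?T = "{m. g m \<noteq> 0}"
  have fin: "finite ?S" "finite ?T" using assms by (auto simp: fs_def)
  have e1: "mulA th (addA f1 f2) g c = (\<Sum>a\<in>?S. \<Sum>b\<in>?T. if (\<lambda>k. a k + b k) = c then phase th a b * addA f1 f2 a * g b else 0)"
    by (rule mulA_eq) (use fin in \<open>auto simp: addA_def\<close>)
  have e2: "mulA th f1 g c = (\<Sum>a\<in>?S. \<Sum>b\<in>?T. if (\<lambda>k. a k + b k) = c then phase th a b * f1 a * g b else 0)"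
    by (rule mulA_eq) (use fin in auto)
  have e3: "mulA th f2 g c = (\<Sum>a\<in>?S. \<Sum>b\<in>?T. if (\<lambda>k. a k + b k) = c then phase th a b * f2 a * g b else 0)"
    by (rule mulA_eq) (use fin in auto)
  show "mulA th (addA f1 f2) g c = addA (mulA th f1 g) (mulA th f2 g) c"
    unfolding e1 unfolding addA_def unfolding e2 e3 by (simp only: if_add_split sum.distrib)
qed

lemma mulA_addA_right:
  assumes "fs f" "fs g1" "fs g2"
  shows "mulA th f (addA g1 g2) = addA (mulA th f g1) (mulA th f g2)"
proof
  fix c
  let ?T = "{m. g1 m \<noteq> 0} \<union> {m. g2 m \<noteq> 0}" and ?S = "{m. f m \<noteq> 0}"
  have fin: "finite ?S" "finite ?T" using assms by (auto simp: fs_def)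
  have e1: "mulA th f (addA g1 g2) c = (\<Sum>a\<in>?S. \<Sum>b\<in>?T. if (\<lambda>k. a k + b k) = c then phase th a b * f a * addA g1 g2 b else 0)"
    by (rule mulA_eq) (use fin in \<open>auto simp: addA_def\<close>)
  have e2: "mulA th f g1 c = (\<Sum>a\<in>?S. \<Sum>b\<in>?T. if (\<lambda>k. a k + b k) = c then phase th a b * f a * g1 b else 0)"
    by (rule mulA_eq) (use fin in auto)
  have e3: "mulA th f g2 c = (\<Sum>a\<in>?S. \<Sum>b\<in>?T. if (\<lambda>k. a k + b k) = c then phase th a b * f a * g2 b else 0)"
    by (rule mulA_eq) (use fin in auto)
  show "mulA th f (addA g1 g2) c = addA (mulA th f g1) (mulA th f g2) c"
    unfolding e1 unfolding addA_def unfolding e2 e3 by (simp only: if_add_split sum.distrib)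
qed

lemma mulA_smulA_left:
  assumes "fs f" "fs g"
  shows "mulA th (smulA x f) g = smulA x (mulA th f g)"
proof
  fix c
  let ?S = "{m. f m \<noteq> 0}" and ?T = "{m. g m \<noteq> 0}"
  have fin: "finite ?S" "finite ?T" using assms by (auto simp: fs_def)
  have e1: "mulA th (smulA x f) g c = (\<Sum>a\<in>?S. \<Sum>b\<in>?T. if (\<lambda>k. a k + b k) = c then phase th a b * smulA x f a * g b else 0)"
    by (rule mulA_eq) (use fin in \<open>auto simp: smulA_def\<close>)
  have e2: "mulA th f g c = (\<Sum>a\<in>?S. \<Sum>b\<in>?T. if (\<lambda>k. a k + b k) = c then phase th a b * f a * g b else 0)"
    by (rule mulA_eq) (use fin in auto)
  show "mulA th (smulA x f) g c = smulA x (mulA th f g) c"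
    unfolding e1 unfolding smulA_def unfolding e2
    by (auto simp: sum_distrib_left intro!: sum.cong)
qed

lemma mulA_smulA_right:
  assumes "fs f" "fs g"
  shows "mulA th f (smulA x g) = smulA x (mulA th f g)"
proof
  fix c
  let ?S = "{m. f m \<noteq> 0}" and ?T = "{m. g m \<noteq> 0}"
  have fin: "finite ?S" "finite ?T" using assms by (auto simp: fs_def)
  have e1: "mulA th f (smulA x g) c = (\<Sum>a\<in>?S. \<Sum>b\<in>?T. if (\<lambda>k. a k + b k) = c then phase th a b * f a * smulA x g b else 0)"
    by (rule mulA_eq) (use fin in \<open>auto simp: smulA_def\<close>)
  have e2: "mulA th f g c = (\<Sum>a\<in>?S. \<Sum>b\<in>?T. if (\<lambda>k. a k + b k) = c then phase th a b * f a * g b else 0)"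
    by (rule mulA_eq) (use fin in auto)
  show "mulA th f (smulA x g) c = smulA x (mulA th f g) c"
    unfolding e1 unfolding smulA_def unfolding e2
    by (auto simp: sum_distrib_left intro!: sum.cong)
qed

lemma mulA_sumA_left:
  assumes "finite S" "\<And>x. x \<in> S \<Longrightarrow> fs (F x)" "fs g"
  shows "mulA th (sumA F S) g = sumA (\<lambda>x. mulA th (F x) g) S"
  using assms by (induction S rule: finite_induct) (auto simp: mulA_addA_left)

lemma mulA_sumA_right:
  assumes "finite S" "\<And>x. x \<in> S \<Longrightarrow> fs (F x)" "fs f"
  shows "mulA th f (sumA F S) = sumA (\<lambda>x. mulA th f (F x)) S"
  using assms by (induction S rule: finite_induct) (auto simp: mulA_addA_right)

lemma fs_decomp: "fs f \<Longrightarrow> sumA (\<lambda>a. smulA (f a) (dl a)) {m. f m \<noteq> 0} = f"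
proof
  fix x assume "fs f"
  then have fin: "finite {m. f m \<noteq> 0}" by (simp add: fs_def)
  have "sumA (\<lambda>a. smulA (f a) (dl a)) {m. f m \<noteq> 0} x = (\<Sum>a\<in>{m. f m \<noteq> 0}. if x = a then f a else 0)"
    unfolding sumA_def smulA_def dl_def by (intro sum.cong) auto
  also have "\<dots> = f x" using fin by (simp add: sum.delta)
  finally show "sumA (\<lambda>a. smulA (f a) (dl a)) {m. f m \<noteq> 0} x = f x" .
qed

lemma mulA_dl: "mulA th (dl a) (dl b) = smulA (phase th a b) (dl (\<lambda>k. a k + b k))"
proof
  fix c
  have "mulA th (dl a) (dl b) c = (\<Sum>a'\<in>{a}. \<Sum>b'\<in>{b}. if (\<lambda>k. a' k + b' k) = c then phase th a' b' * dl a a' * dl b b' else 0)"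
    by (rule mulA_eq) (auto simp: dl_def)
  then show "mulA th (dl a) (dl b) c = smulA (phase th a b) (dl (\<lambda>k. a k + b k)) c"
    by (cases "(\<lambda>k. a k + b k) = c") (simp_all add: dl_def smulA_def)
qed

lemma if_mult_one: "(if P then (x::complex) * y else 1) = (if P then x else 1) * (if P then y else 1)"
  by simp

lemma phase_add_left: "phase th (\<lambda>k. a k + b k) c = phase th a c * phase th b c"
proof -
  have "\<And>i j. (if j < i then Rmat th j i ^ ((a i + b i) * c j) else 1) = (if j < i then Rmat th j i ^ (a i * c j) else 1) * (if j < i then Rmat th j i ^ (b i * c j) else 1)"
    by (simp add: add_mult_distrib power_add)
  then show ?thesis unfolding phase_def by (simp add: prod.distrib)
qed

lemma phase_add_right: "phase th a (\<lambda>k. b k + c k) = phase th a b * phase th a c"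
proof -
  have "\<And>i j. (if j < i then Rmat th j i ^ (a i * (b j + c j)) else 1) = (if j < i then Rmat th j i ^ (a i * b j) else 1) * (if j < i then Rmat th j i ^ (a i * c j) else 1)"
    by (simp add: add_mult_distrib2 power_add)
  then show ?thesis unfolding phase_def by (simp add: prod.distrib)
qed




lemma fs_SA: "fs f \<Longrightarrow> \<exists>F S. finite S \<and> f = sumA (\<lambda>a. smulA (F a) (dl a)) S"
  by (rule exI[of _ f], rule exI[of _ "{m. f m \<noteq> 0}"]) (simp add: fs_decomp fs_def)

lemma sumA_cong: "(\<And>x. x \<in> S \<Longrightarrow> F x = G x) \<Longrightarrow> sumA F S = sumA G S"
  unfolding sumA_def by (rule ext, rule sum.cong) auto

lemma mulA_SA_left:
  assumes "finite S" "\<And>x. x \<in> S \<Longrightarrow> fs (G x)" "fs g"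
  shows "mulA th (sumA (\<lambda>x. smulA (c x) (G x)) S) g = sumA (\<lambda>x. smulA (c x) (mulA th (G x) g)) S"
  using assms by (simp add: mulA_sumA_left mulA_smulA_left cong: sumA_cong)

lemma mulA_SA_right:
  assumes "finite S" "\<And>x. x \<in> S \<Longrightarrow> fs (G x)" "fs f"
  shows "mulA th f (sumA (\<lambda>x. smulA (c x) (G x)) S) = sumA (\<lambda>x. smulA (c x) (mulA th f (G x))) S"
  using assms by (simp add: mulA_sumA_right mulA_smulA_right cong: sumA_cong)

lemma assoc_dl: "mulA th (mulA th (dl a) (dl b)) (dl c) = mulA th (dl a) (mulA th (dl b) (dl c))"
proof -
  have e: "(\<lambda>k. (a k + b k) + c k) = (\<lambda>k. a k + (b k + c k))" by (simp add: add.assoc)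
  show ?thesis
    by (simp add: mulA_dl mulA_smulA_left mulA_smulA_right phase_add_left phase_add_right e) (simp add: smulA_def mult_ac)
qed

lemma assoc3:
  assumes "fs h"
  shows "mulA th (mulA th (dl a) (dl b)) h = mulA th (dl a) (mulA th (dl b) h)"
proof -
  obtain H S where S: "finite S" and h: "h = sumA (\<lambda>x. smulA (H x) (dl x)) S" using fs_SA[OF assms] by blast
  show ?thesis unfolding h
    by (simp add: S mulA_SA_right fs_mulA assoc_dl)
qed

lemma assoc2:
  assumes "fs g" "fs h"
  shows "mulA th (mulA th (dl a) g) h = mulA th (dl a) (mulA th g h)"
proof -
  obtain G S where S: "finite S" and g: "g = sumA (\<lambda>x. smulA (G x) (dl x)) S" using fs_SA[OF assms(1)] by blast
  show ?thesis unfolding g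
    by (simp add: S mulA_SA_right mulA_SA_left fs_mulA assoc3 assms(2))
qed

lemma mulA_assoc:
  assumes "fs f" "fs g" "fs h"
  shows "mulA th (mulA th f g) h = mulA th f (mulA th g h)"
proof -
  obtain F S where S: "finite S" and f: "f = sumA (\<lambda>x. smulA (F x) (dl x)) S" using fs_SA[OF assms(1)] by blast
  show ?thesis unfolding f
    by (simp add: S mulA_SA_left fs_mulA assoc2 assms(2,3))
qed




definition chi :: "real \<Rightarrow> nat \<Rightarrow> mono \<Rightarrow> complex" where
  "chi th i m = (\<Prod>j\<in>idx. (Rmat th j i) ^ (m j))"

lemma twist_chi: "twist th i f = (\<lambda>m. chi th i m * f m)"
  by (simp add: twist_def chi_def)

lemma chi_add: "chi th i (\<lambda>k. a k + b k) = chi th i a * chi th i b"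
  by (simp add: chi_def power_add prod.distrib)

lemma chi_zero: "chi th i (\<lambda>_. 0) = 1"
  by (simp add: chi_def)

lemma phase_zero_right: "phase th a (\<lambda>_. 0) = 1"
  unfolding phase_def by (intro prod.neutral ballI) simp
lemma phase_zero_left: "phase th (\<lambda>_. 0) b = 1"
  unfolding phase_def by (intro prod.neutral ballI) simp

lemma twist_mulA:
  assumes "fs f" "fs g"
  shows "twist th i (mulA th f g) = mulA th (twist th i f) (twist th i g)"
proof
  fix c
  let ?S = "{m. f m \<noteq> 0}" and ?T = "{m. g m \<noteq> 0}"
  have fin: "finite ?S" "finite ?T" using assms by (auto simp: fs_def)
  have e1: "mulA th f g c = (\<Sum>a\<in>?S. \<Sum>b\<in>?T. if (\<lambda>k. a k + b k) = c then phase th a b * f a * g b else 0)"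
    by (rule mulA_eq) (use fin in auto)
  have e2: "mulA th (twist th i f) (twist th i g) c = (\<Sum>a\<in>?S. \<Sum>b\<in>?T. if (\<lambda>k. a k + b k) = c then phase th a b * twist th i f a * twist th i g b else 0)"
    by (rule mulA_eq) (use fin in \<open>auto simp: twist_chi\<close>)
  show "twist th i (mulA th f g) c = mulA th (twist th i f) (twist th i g) c"
    unfolding e2 unfolding twist_chi unfolding e1
    by (auto simp: sum_distrib_left chi_add intro!: sum.cong)
qed

lemma twist_addA: "twist th i (addA f g) = addA (twist th i f) (twist th i g)"
  by (simp add: twist_chi addA_def algebra_simps)
lemma twist_smulA: "twist th i (smulA c f) = smulA c (twist th i f)"
  by (simp add: twist_chi smulA_def algebra_simps)
lemma twist_zeroA[simp]: "twist th i zeroA = zeroA"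
  by (simp add: twist_chi zeroA_def)
lemma twist_oneA[simp]: "twist th i oneA = oneA"
  by (auto simp: twist_chi oneA_def chi_zero)
lemma twist_comm: "twist th i (twist th j f) = twist th j (twist th i f)"
  by (simp add: twist_chi algebra_simps)
lemma twist_sumA: "finite S \<Longrightarrow> twist th i (sumA F S) = sumA (\<lambda>x. twist th i (F x)) S"
  by (simp add: twist_chi sumA_def sum_distrib_left)

lemma idx_eq: "idx = {1,2,3,4}" by (auto simp: idx_def)

lemma Rmat_pair:
  assumes "k \<in> idx" "(i, j) \<in> {(1,3), (2,4), (3,1), (4,2)}"
  shows "Rmat th k i * Rmat th k j = 1"
proof -
  have c: "cis th * cis (- th) = 1" "cis (- th) * cis th = 1" by (simp_all add: cis_mult)
  show ?thesis using assms c by (auto simp: idx_eq Rmat_def Let_def)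
qed

lemma twist_pair:
  assumes "(i, j) \<in> {(1,3), (2,4), (3,1), (4,2)}"
  shows "twist th i (twist th j f) = f"
proof -
  have "chi th i m * chi th j m = 1" for m
  proof -
    have "chi th i m * chi th j m = (\<Prod>k\<in>idx. (Rmat th k i * Rmat th k j) ^ (m k))"
      by (simp add: chi_def power_mult_distrib prod.distrib)
    also have "\<dots> = 1" using Rmat_pair[OF _ assms] by simp
    finally show ?thesis .
  qed
  then show ?thesis by (simp add: twist_chi mult.assoc[symmetric])
qed

lemma mulA_oneA_right: "fs f \<Longrightarrow> mulA th f oneA = f"
proof
  fix c assume "fs f"
  then have fin: "finite {m. f m \<noteq> 0}" by (simp add: fs_def)
  have "mulA th f oneA c = (\<Sum>a\<in>{m. f m \<noteq> 0}. \<Sum>b\<in>{\<lambda>_. 0}. if (\<lambda>k. a k + b k) = c then phase th a b * f a * oneA b else 0)"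
    by (rule mulA_eq) (use fin in \<open>auto simp: oneA_def\<close>)
  also have "\<dots> = (\<Sum>a\<in>{m. f m \<noteq> 0}. if c = a then f a else 0)"
    by (intro sum.cong) (auto simp: oneA_def phase_zero_right)
  also have "\<dots> = f c" using fin by (simp add: sum.delta)
  finally show "mulA th f oneA c = f c" .
qed

lemma mulA_oneA_left: "fs f \<Longrightarrow> mulA th oneA f = f"
proof
  fix c assume "fs f"
  then have fin: "finite {m. f m \<noteq> 0}" by (simp add: fs_def)
  have "mulA th oneA f c = (\<Sum>a\<in>{\<lambda>_. 0}. \<Sum>b\<in>{m. f m \<noteq> 0}. if (\<lambda>k. a k + b k) = c then phase th a b * oneA a * f b else 0)"
    by (rule mulA_eq) (use fin in \<open>auto simp: oneA_def\<close>)
  also have "\<dots> = (\<Sum>b\<in>{m. f m \<noteq> 0}. if c = b then f b else 0)"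
    by (simp only: sum.insert sum.empty finite.emptyI empty_iff not_False_eq_True add_0_right, rule sum.cong) (auto simp: oneA_def phase_zero_left)
  also have "\<dots> = f c" using fin by (simp add: sum.delta)
  finally show "mulA th oneA f c = f c" .
qed




definition gt :: "complex \<Rightarrow> nat \<Rightarrow> nat \<Rightarrow> nat \<Rightarrow> complex" where
  "gt p i r c = (if (i,r,c) = (1,1,4) then -2*p else if (i,r,c) = (1,3,2) then 2 * inverse p
     else if (i,r,c) = (2,1,3) then -2 * inverse p else if (i,r,c) = (2,4,2) then -2*p
     else if (i,r,c) = (3,2,3) then -2*p else if (i,r,c) = (3,4,1) then 2 * inverse p
     else if (i,r,c) = (4,2,4) then 2 * inverse p else if (i,r,c) = (4,3,1) then 2*p else 0)"

definition Rt :: "complex \<Rightarrow> nat \<Rightarrow> nat \<Rightarrow> complex" where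
  "Rt p r c = [[1, inverse p ^ 4, 1, p ^ 4], [p ^ 4, 1, inverse p ^ 4, 1], [1, p ^ 4, 1, inverse p ^ 4], [inverse p ^ 4, 1, p ^ 4, 1]] ! (r - 1) ! (c - 1)"

lemma coeff_abs:
  fixes p :: complex
  assumes "p \<noteq> 0" "i \<in> {1,2,3,4}" "j \<in> {1,2,3,4}" "b \<in> {1,2,3,4}" "a \<in> {1,2,3,4}"
  shows "(\<Sum>c\<in>{1,2,3,4}. gt p i b c * gt p j c a) + Rt p j i * (\<Sum>c\<in>{1,2,3,4}. gt p j b c * gt p i c a)
     = -2 * gup i j * (if b = a then 1 else 0)"
  using assms(2-5)
  apply (elim insertE emptyE)
  apply (simp_all add: gt_def Rt_def gup_def)
  apply (simp_all add: field_simps assms(1))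
  apply (simp_all add: power4_eq_xxxx mult.assoc)
  done




lemma cis_facts: "cis (- th / 4) = inverse (cis (th/4))" "cis th = cis (th/4) ^ 4" "cis (- th) = inverse (cis (th/4)) ^ 4"
proof -
  show 1: "cis (- th / 4) = inverse (cis (th/4))" by (simp add: cis_inverse)
  show 2: "cis th = cis (th/4) ^ 4" by (simp add: DeMoivre)
  have "inverse (cis (th/4)) ^ 4 = inverse (cis (th/4) ^ 4)" by (rule power_inverse)
  also have "\<dots> = inverse (cis th)" using 2 by simp
  also have "\<dots> = cis (- th)" by simp
  finally show "cis (- th) = inverse (cis (th/4)) ^ 4" by simp
qed


lemma gam_tab:
  assumes "i \<in> idx" "r \<in> idx" "c \<in> idx"
  shows "gam th i r c = gt (cis (th/4)) i r c"
proof -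
  have m: "cis (- th / 4) = inverse (cis (th/4))" by (rule cis_facts)
  show ?thesis
    using assms unfolding idx_eq gam_def Let_def m
    apply (elim insertE emptyE)
    apply (simp_all add: gt_def offdiag_def mlin_def pauli_def I2_def del: cis_inverse)
    done
qed

lemma Rmat_tab:
  assumes "r \<in> idx" "c \<in> idx"
  shows "Rmat th r c = Rt (cis (th/4)) r c"
  using assms unfolding idx_eq Rmat_def Let_def Rt_def cis_facts(2,3)[of th]
  by (elim insertE emptyE) (simp_all del: cis_inverse)

lemma coeff:
  assumes "i \<in> idx" "j \<in> idx" "b \<in> idx" "a \<in> idx"
  shows "(\<Sum>c\<in>idx. gam th i b c * gam th j c a) + Rmat th j i * (\<Sum>c\<in>idx. gam th j b c * gam th i c a)
     = -2 * gup i j * (if b = a then 1 else 0)"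
proof -
  have "(\<Sum>c\<in>idx. gam th i b c * gam th j c a) = (\<Sum>c\<in>{1,2,3,4}. gt (cis (th/4)) i b c * gt (cis (th/4)) j c a)"
    unfolding idx_eq[symmetric] using assms by (intro sum.cong) (simp_all add: gam_tab)
  moreover have "(\<Sum>c\<in>idx. gam th j b c * gam th i c a) = (\<Sum>c\<in>{1,2,3,4}. gt (cis (th/4)) j b c * gt (cis (th/4)) i c a)"
    unfolding idx_eq[symmetric] using assms by (intro sum.cong) (simp_all add: gam_tab)
  moreover have "Rmat th j i = Rt (cis (th/4)) j i" using assms by (simp add: Rmat_tab)
  ultimately show ?thesis using coeff_abs[of "cis (th/4)" i j b a] assms unfolding idx_eq by simp
qed




lemma isA_fs: "isA f \<Longrightarrow> fs f" by (simp add: isA_def fs_def)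
lemma isV_fs: "isV v \<Longrightarrow> fs (v i)" by (simp add: isV_def isA_fs)
lemma isV_out: "isV v \<Longrightarrow> i \<notin> idx \<Longrightarrow> v i = zeroA" by (simp add: isV_def)
lemma fin_idx[simp]: "finite idx" by (simp add: idx_def)

lemma gamma2_pt:
  assumes "b \<in> idx"
  shows "gamma2 th X b m = (\<Sum>i\<in>idx. \<Sum>j\<in>idx. \<Sum>a\<in>idx. (\<Sum>c\<in>idx. gam th i b c * gam th j c a) * X i j a m)"
proof -
  have "gamma2 th X b m = (\<Sum>(i,c)\<in>idx\<times>idx. gam th i b c * id_gamma th X i c m)"
    using assms by (simp add: gamma2_def gamma_def restr1_def sumA_def smulA_def case_prod_beta')
  also have "\<dots> = (\<Sum>(i,c)\<in>idx\<times>idx. gam th i b c * (\<Sum>(j,a)\<in>idx\<times>idx. gam th j c a * X i j a m))"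
    by (intro sum.cong refl) (auto simp: id_gamma_def restr2_def sumA_def smulA_def case_prod_beta')
  also have "\<dots> = (\<Sum>i\<in>idx. \<Sum>c\<in>idx. \<Sum>j\<in>idx. \<Sum>a\<in>idx. gam th i b c * (gam th j c a * X i j a m))"
    by (simp add: sum.cartesian_product[symmetric] sum_distrib_left)
  also have "\<dots> = (\<Sum>i\<in>idx. \<Sum>j\<in>idx. \<Sum>c\<in>idx. \<Sum>a\<in>idx. gam th i b c * (gam th j c a * X i j a m))"
    by (rule sum.cong[OF refl], rule sum.swap)
  also have "\<dots> = (\<Sum>i\<in>idx. \<Sum>j\<in>idx. \<Sum>a\<in>idx. \<Sum>c\<in>idx. gam th i b c * (gam th j c a * X i j a m))"
    by (rule sum.cong[OF refl], rule sum.cong[OF refl], rule sum.swap)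
  also have "\<dots> = (\<Sum>i\<in>idx. \<Sum>j\<in>idx. \<Sum>a\<in>idx. (\<Sum>c\<in>idx. gam th i b c * gam th j c a) * X i j a m)"
    by (simp add: sum_distrib_right mult.assoc)
  finally show ?thesis .
qed

lemma gup_pair: "gup i j \<noteq> 0 \<Longrightarrow> (i, j) \<in> {(1,3), (2,4), (3,1), (4,2)}"
  by (auto simp: gup_def split: if_splits)

lemma clifford:
  assumes w: "isV w" and z: "isV z" and s: "isV s"
  shows "add1 (gamma2 th (tensO_OE th w (tensOE th z s))) (gamma2 th (tensOO_E th (sigma th (tensOE th w z)) s))
       = lact1 th (smulA (-2) (ginv (tensOE th w z))) s"
proof
  fix b
  define Y where "Y i j a = mulA th (mulA th (w i) (twist th i (z j))) (twist th i (twist th j (s a)))" for i j a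
  have fw: "fs (w i)" and fz: "fs (z i)" and fsb: "fs (s i)" for i using w z s by (simp_all add: isV_fs)
  have X1: "tensO_OE th w (tensOE th z s) i j a = Y i j a" if "i \<in> idx" "j \<in> idx" "a \<in> idx" for i j a
  proof -
    have "tensO_OE th w (tensOE th z s) i j a = mulA th (w i) (twist th i (mulA th (z j) (twist th j (s a))))"
      using that by (simp add: tensO_OE_def tensOE_def restr3_def restr2_def)
    also have "\<dots> = mulA th (w i) (mulA th (twist th i (z j)) (twist th i (twist th j (s a))))"
      by (simp add: twist_mulA fz fsb)
    also have "\<dots> = Y i j a"
      unfolding Y_def by (rule mulA_assoc[symmetric]) (simp_all add: fw fz fsb)
    finally show ?thesis .
  qed
  have X2: "tensOO_E th (sigma th (tensOE th w z)) s i j a = smulA (Rmat th i j) (Y j i a)" if "i \<in> idx" "j \<in> idx" "a \<in> idx" for i j a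
  proof -
    have "tensOO_E th (sigma th (tensOE th w z)) s i j a
        = mulA th (smulA (Rmat th i j) (mulA th (w j) (twist th j (z i)))) (twist th i (twist th j (s a)))"
      using that by (simp add: tensOO_E_def sigma_def tensOE_def restr3_def restr2_def)
    also have "\<dots> = smulA (Rmat th i j) (mulA th (mulA th (w j) (twist th j (z i))) (twist th j (twist th i (s a))))"
      by (simp add: mulA_smulA_left fs_mulA fsb twist_comm[of th i j])
    finally show ?thesis unfolding Y_def .
  qed
  show "add1 (gamma2 th (tensO_OE th w (tensOE th z s))) (gamma2 th (tensOO_E th (sigma th (tensOE th w z)) s)) b
       = lact1 th (smulA (-2) (ginv (tensOE th w z))) s b"
  proof (cases "b \<in> idx")
    case False
    then show ?thesis using s
      by (simp add: add1_def gamma2_def gamma_def restr1_def lact1_def isV_out) (simp add: addA_def zeroA_def)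
  next
    case True
    let ?M = "\<lambda>i j a. (\<Sum>c\<in>idx. gam th i b c * gam th j c a)"
    show ?thesis
    proof
      fix m
      have L1: "gamma2 th (tensO_OE th w (tensOE th z s)) b m = (\<Sum>i\<in>idx. \<Sum>j\<in>idx. \<Sum>a\<in>idx. ?M i j a * Y i j a m)"
        unfolding gamma2_pt[OF True] by (intro sum.cong refl) (simp add: X1)
      have L2: "gamma2 th (tensOO_E th (sigma th (tensOE th w z)) s) b m
          = (\<Sum>i\<in>idx. \<Sum>j\<in>idx. \<Sum>a\<in>idx. ?M i j a * (Rmat th i j * Y j i a m))"
        unfolding gamma2_pt[OF True] by (intro sum.cong refl) (simp add: X2 smulA_def)
      also have "\<dots> = (\<Sum>i\<in>idx. \<Sum>j\<in>idx. \<Sum>a\<in>idx. ?M j i a * (Rmat th j i * Y i j a m))"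
        by (rule sum.swap)
      finally have L2': "gamma2 th (tensOO_E th (sigma th (tensOE th w z)) s) b m
          = (\<Sum>i\<in>idx. \<Sum>j\<in>idx. \<Sum>a\<in>idx. ?M j i a * (Rmat th j i * Y i j a m))" .
      have "add1 (gamma2 th (tensO_OE th w (tensOE th z s))) (gamma2 th (tensOO_E th (sigma th (tensOE th w z)) s)) b m
          = (\<Sum>i\<in>idx. \<Sum>j\<in>idx. \<Sum>a\<in>idx. (?M i j a + Rmat th j i * ?M j i a) * Y i j a m)"
        unfolding add1_def addA_def L1 L2' by (simp add: sum.distrib[symmetric] algebra_simps)
      also have "\<dots> = (\<Sum>i\<in>idx. \<Sum>j\<in>idx. \<Sum>a\<in>idx. (-2 * gup i j * (if b = a then 1 else 0)) * Y i j a m)"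
        by (intro sum.cong refl) (simp add: coeff True)
      also have "\<dots> = (\<Sum>i\<in>idx. \<Sum>j\<in>idx. -2 * gup i j * Y i j b m)"
      proof -
        have d: "(\<Sum>a\<in>idx. (-2 * gup i j * (if b = a then 1 else 0)) * Y i j a m) = -2 * gup i j * Y i j b m" for i j
        proof -
          have "(\<Sum>a\<in>idx. (-2 * gup i j * (if b = a then 1 else 0)) * Y i j a m) = (\<Sum>a\<in>idx. if b = a then -2 * gup i j * Y i j a m else 0)"
            by (rule sum.cong) auto
          also have "\<dots> = -2 * gup i j * Y i j b m" using True by (simp add: sum.delta)
          finally show ?thesis .
        qed
        show ?thesis by (simp only: d)
      qed
      finally have LHS: "add1 (gamma2 th (tensO_OE th w (tensOE th z s))) (gamma2 th (tensOO_E th (sigma th (tensOE th w z)) s)) b m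
          = (\<Sum>i\<in>idx. \<Sum>j\<in>idx. -2 * gup i j * Y i j b m)" .
      have RHS: "lact1 th (smulA (-2) (ginv (tensOE th w z))) s b m = (\<Sum>i\<in>idx. \<Sum>j\<in>idx. -2 * gup i j * Y i j b m)"
      proof -
        let ?T = "tensOE th w z"
        have fT: "fs (?T i j)" for i j by (simp add: tensOE_def restr2_def fs_mulA)
        have fG: "fs (ginv ?T)" unfolding ginv_def by (rule fs_sumA) (auto simp: fT split: prod.splits)
        have e1: "lact1 th (smulA (-2) (ginv ?T)) s b = smulA (-2) (mulA th (ginv ?T) (s b))"
          unfolding lact1_def by (rule mulA_smulA_left) (simp_all add: fG fsb)
        have e2: "mulA th (ginv ?T) (s b) = sumA (\<lambda>x. mulA th ((\<lambda>(i,j). smulA (gup i j) (?T i j)) x) (s b)) (idx \<times> idx)"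
          unfolding ginv_def by (rule mulA_sumA_left) (auto simp: fT fsb split: prod.splits)
        have e3: "mulA th ((\<lambda>(i,j). smulA (gup i j) (?T i j)) x) (s b) = (\<lambda>(i,j). smulA (gup i j) (mulA th (?T i j) (s b))) x" for x
          by (cases x) (simp add: mulA_smulA_left fT fsb)
        have e4: "gup i j * mulA th (?T i j) (s b) m = gup i j * Y i j b m" if "i \<in> idx" "j \<in> idx" for i j
        proof (cases "gup i j = 0")
          case False
          then have "twist th i (twist th j (s b)) = s b" using gup_pair twist_pair by blast
          then show ?thesis using that by (simp add: Y_def tensOE_def restr2_def)
        qed simp
        have "lact1 th (smulA (-2) (ginv ?T)) s b m = -2 * (\<Sum>x\<in>idx \<times> idx. (\<lambda>(i,j). gup i j * mulA th (?T i j) (s b) m) x)"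
          unfolding e1 e2 e3 by (simp add: smulA_def sumA_def split_def)
        also have "\<dots> = -2 * (\<Sum>i\<in>idx. \<Sum>j\<in>idx. gup i j * mulA th (?T i j) (s b) m)"
          by (simp add: sum.cartesian_product)
        also have "\<dots> = -2 * (\<Sum>i\<in>idx. \<Sum>j\<in>idx. gup i j * Y i j b m)"
          by (intro arg_cong[where f = "\<lambda>x. -2 * x"] sum.cong refl) (simp add: e4)
        also have "\<dots> = (\<Sum>i\<in>idx. \<Sum>j\<in>idx. -2 * gup i j * Y i j b m)"
          by (simp add: sum_distrib_left mult.assoc)
        finally show ?thesis .
      qed
      show "add1 (gamma2 th (tensO_OE th w (tensOE th z s))) (gamma2 th (tensOO_E th (sigma th (tensOE th w z)) s)) b m
          = lact1 th (smulA (-2) (ginv (tensOE th w z))) s b m"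
        unfolding LHS RHS ..
    qed
  qed
qed




lemma isA_zeroA[simp]: "isA zeroA" by (simp add: isA_def zeroA_def)
lemma isA_oneA[simp]: "isA oneA" by (simp add: isA_def oneA_def)
lemma isA_addA[simp]: "isA f \<Longrightarrow> isA g \<Longrightarrow> isA (addA f g)"
  unfolding isA_def addA_def
  apply (auto intro: finite_subset[of _ "{m. f m \<noteq> 0} \<union> {m. g m \<noteq> 0}"])
  by (metis add.left_neutral)
lemma isA_smulA[simp]: "isA f \<Longrightarrow> isA (smulA c f)"
  unfolding isA_def smulA_def
  by (auto intro: finite_subset[of _ "{m. f m \<noteq> 0}"])
lemma isA_sumA[simp]: "finite S \<Longrightarrow> (\<And>x. x \<in> S \<Longrightarrow> isA (F x)) \<Longrightarrow> isA (sumA F S)"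
  by (induction S rule: finite_induct) auto
lemma isA_fs': "isA f \<Longrightarrow> fs f" by (simp add: isA_def fs_def)

locale dloc =
  fixes th :: real and d :: "alg \<Rightarrow> form1"
  assumes D: "is_diff th d"
begin

lemma d_add: "isA f \<Longrightarrow> isA g \<Longrightarrow> d (addA f g) = add1 (d f) (d g)"
  using D by (simp add: is_diff_def)
lemma d_smul: "isA f \<Longrightarrow> d (smulA c f) = smul1 c (d f)"
  using D by (simp add: is_diff_def)
lemma d_mul: "isA f \<Longrightarrow> isA g \<Longrightarrow> d (mulA th f g) = add1 (ractO th (d f) g) (lact1 th f (d g))"
  using D by (simp add: is_diff_def)

lemma d_zero: "d zeroA = (\<lambda>k. zeroA)"
proof -
  have "zeroA = smulA 0 zeroA" by (simp add: zeroA_def smulA_def)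
  then have "d zeroA = smul1 0 (d zeroA)" using d_smul[of zeroA 0] by simp
  then show ?thesis by (simp add: smul1_def smulA_def zeroA_def)
qed

lemma d_sumA: "finite S \<Longrightarrow> (\<And>x. x \<in> S \<Longrightarrow> isA (F x)) \<Longrightarrow> d (sumA F S) = (\<lambda>k. sumA (\<lambda>x. d (F x) k) S)"
proof (induction S rule: finite_induct)
  case empty then show ?case by (simp add: d_zero)
next
  case (insert x S)
  then show ?case by (simp add: d_add add1_def)
qed

lemma d_one: "d oneA = (\<lambda>k. zeroA)"
proof
  fix k
  let ?x = "d oneA k"
  have "d oneA = d (mulA th oneA oneA)" by (simp add: mulA_oneA_right)
  also have "\<dots> = add1 (ractO th (d oneA) oneA) (lact1 th oneA (d oneA))" by (simp add: d_mul)
  finally have E: "d oneA = add1 (ractO th (d oneA) oneA) (lact1 th oneA (d oneA))" .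
  have "?x = add1 (ractO th (d oneA) oneA) (lact1 th oneA (d oneA)) k" by (rule fun_cong[OF E])
  also have "\<dots> = addA (mulA th ?x oneA) (mulA th oneA ?x)" by (simp add: add1_def ractO_def lact1_def)
  finally have "?x = addA (mulA th ?x oneA) (mulA th oneA ?x)" .
  then show "?x = zeroA"
  proof (cases "fs ?x")
    case True
    assume h: "?x = addA (mulA th ?x oneA) (mulA th oneA ?x)"
    then have "?x = addA ?x ?x" using True by (simp add: mulA_oneA_right mulA_oneA_left)
    then have "\<And>m. ?x m = ?x m + ?x m" by (metis addA_def)
    then show ?thesis by (auto simp: zeroA_def)
  next
    case False
    assume h: "?x = addA (mulA th ?x oneA) (mulA th oneA ?x)"
    then show ?thesis using False by (simp add: mulA_nfs mulA_nfs2 addA_def zeroA_def)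
  qed
qed

lemma d_right_one: "isA f \<Longrightarrow> mulA th (d f k) oneA = d f k"
proof -
  assume f: "isA f"
  have "d f = d (mulA th f oneA)" using f by (simp add: mulA_oneA_right isA_fs')
  also have "\<dots> = add1 (ractO th (d f) oneA) (lact1 th f (d oneA))" using f by (simp add: d_mul)
  finally have E: "d f = add1 (ractO th (d f) oneA) (lact1 th f (d oneA))" .
  have "d f k = add1 (ractO th (d f) oneA) (lact1 th f (d oneA)) k" by (rule fun_cong[OF E])
  also have "\<dots> = addA (mulA th (d f k) oneA) (mulA th f zeroA)" by (simp add: add1_def ractO_def lact1_def d_one)
  also have "\<dots> = mulA th (d f k) oneA" by (simp add: addA_def, simp add: zeroA_def)
  finally show ?thesis by simp
qed

lemma NP:
  assumes U: "isA u" and k: "k \<in> idx" and j: "j \<in> idx" and a: "a \<in> idx"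
  shows "nablaT_pure th d (lact1 th u (dz i)) (eE a') k j a = (if i = j \<and> a' = a then d u k else zeroA)"
proof -
  let ?W = "lact1 th u (dz i)"
  have W: "?W = (\<lambda>l. if l = i then u else zeroA)"
    using U by (auto simp: lact1_def dz_def mulA_oneA_right isA_fs')
  have Sp: "nablaSp d (eE a') = (\<lambda>k c. zeroA)"
    by (intro ext) (auto simp: nablaSp_def restr2_def eE_def d_one d_zero)
  have P2: "sigma_id th (tensO_OE th ?W (nablaSp d (eE a'))) k j a = zeroA"
    unfolding Sp by (simp add: sigma_id_def tensO_OE_def restr3_def, simp add: smulA_def zeroA_def)
  have P1': "tensOO_E th (nablaO d ?W) (eE a') k j a = mulA th (d (if j = i then u else zeroA) k) (twist th k (twist th j (eE a' a)))"
    using k j a by (simp add: tensOO_E_def restr3_def nablaO_def restr2_def W)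
  have P1: "tensOO_E th (nablaO d ?W) (eE a') k j a = (if i = j \<and> a' = a then d u k else zeroA)"
    unfolding P1' using U by (auto simp: eE_def d_right_one d_zero)
  show ?thesis unfolding nablaT_pure_def add3_def P1 P2 by (simp add: addA_def zeroA_def)
qed

lemma nablaT_val:
  assumes U: "\<And>i a. isA (U i a)" and k: "k \<in> idx" and j: "j \<in> idx" and a: "a \<in> idx"
  shows "nablaT th d U k j a = d (U j a) k"
proof
  fix m
  have "nablaT th d U k j a m = (\<Sum>x\<in>idx \<times> idx. (if x = (j, a) then d (U j a) k else zeroA) m)"
    unfolding nablaT_def sum3_def sumA_def
    by (intro sum.cong refl) (auto simp: NP U k j a split: if_splits)
  also have "\<dots> = (\<Sum>x\<in>idx \<times> idx. if x = (j, a) then d (U j a) k m else 0)"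
    by (intro sum.cong refl) (simp add: zeroA_def)
  also have "\<dots> = d (U j a) k m" using j a by (simp add: sum.delta idx_def)
  finally show "nablaT th d U k j a m = d (U j a) k m" .
qed

lemma compat:
  assumes U: "\<And>i a. isA (U i a)"
  shows "nablaSp d (gamma th U) = id_gamma th (nablaT th d U)"
proof (rule ext, rule ext)
  fix k b
  show "nablaSp d (gamma th U) k b = id_gamma th (nablaT th d U) k b"
  proof (cases "k \<in> idx \<and> b \<in> idx")
    case False
    then show ?thesis by (auto simp: nablaSp_def id_gamma_def restr2_def)
  next
    case True
    then have k: "k \<in> idx" and b: "b \<in> idx" by auto
    have "nablaSp d (gamma th U) k b = d (sumA (\<lambda>(i, a). smulA (gam th i b a) (U i a)) (idx \<times> idx)) k"
      using k b by (simp add: nablaSp_def restr2_def gamma_def restr1_def)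
    also have "\<dots> = sumA (\<lambda>x. d ((\<lambda>(i, a). smulA (gam th i b a) (U i a)) x) k) (idx \<times> idx)"
      by (subst d_sumA) (auto simp: U idx_def split: prod.splits)
    also have "\<dots> = sumA (\<lambda>(j, a). smulA (gam th j b a) (nablaT th d U k j a)) (idx \<times> idx)"
      unfolding sumA_def
      by (rule ext, rule sum.cong) (auto simp: d_smul U smul1_def nablaT_val k)
    also have "\<dots> = id_gamma th (nablaT th d U) k b"
      using k b by (simp add: id_gamma_def restr2_def)
    finally show ?thesis .
  qed
qed

end


theorem proposition4p6:
  fixes th :: real and d :: "alg \<Rightarrow> form1"
  assumes "is_diff th d"
  shows "(\<forall>w z s. isV w \<longrightarrow> isV z \<longrightarrow> isV s \<longrightarrow>
            add1 (gamma2 th (tensO_OE th w (tensOE th z s)))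
                 (gamma2 th (tensOO_E th (sigma th (tensOE th w z)) s))
            = lact1 th (smulA (-2) (ginv (tensOE th w z))) s)
       \<and> (\<forall>U. (\<forall>i a. isA (U i a)) \<longrightarrow>
            nablaSp d (gamma th U) = id_gamma th (nablaT th d U))"
  proof -
  interpret dloc th d using assms by (rule dloc.intro)
  show ?thesis using clifford compat by blast
qed

end
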